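(* Let $f:\mathbb{R}^n\to\mathbb{R}\cup\{+\infty\}$ be closed and convex, let $X\in\mathbb{R}^{n\times m}$ have rank $r$ with compact SVD $X=U_r\Sigma_r V_r^\top$ ($U_r\in\mathbb{R}^{n\times r}$, $\Sigma_r\in\mathbb{R}^{r\times r}$, $V_r\in\mathbb{R}^{m\times r}$), let $\gamma>0$ and $k\ge 0$. For an integer $q\ge 0$ define $$p_{\rm con}(q)=\min_{w\in\mathbb{R}^m,\ \|w\|_0\le q}\ f(Xw)+\tfrac{\gamma}{2}\|w\|_2^2,$$ and define the relaxation $$p^{**}_{\rm con}(k)=\min_{v\in\mathbb{R}^m,\ u\in[0,1]^m,\ \mathbf 1^\top u\le k}\ f(XD(u)v)+\tfrac{\gamma}{2}v^\top D(u)v .$$ Let $(v^*,u^* )$ be an optimal solution of this relaxation with optimal value $t^*$, let $z^*=\Sigma_rV_r^\top D(u^* )v^*\in\mathbb{R}^r$, let $\ell_i$ denote the $i$-th column of $\Sigma_rV_r^\top$, and let $c\sim\mathcal N(0,I_m)$. Consider the linear program in $u\in\mathbb{R}^m$: $$\min\ c^\top u\quad\text{s.t.}\quad f(U_rz^* )+\sum_{i=1}^m u_i\tfrac{\gamma}{2}(v_i^* )^2=t^*,\quad \sum_{i=1}^m u_i\le k,\quad \sum_{i=1}^m u_i\ell_i v_i^*=z^*,\quad u\in[0,1]^m.$$ Then, with probability one (over $c$), from an optimal basic feasible solution $\bar u$ of this linear program one can construct the point $w=D(\bar u)v^*$ (equivalently, with $S=\{i:\bar u_i\notin\{0,1\}\}$,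 set $\tilde u_i=1,\tilde v_i=\bar u_iv_i^*$ for $i\in S$ and $\tilde u_i=\bar u_i,\tilde v_i=v_i^*$ for $i\notin S$, and $w=D(\tilde u)\tilde v$), which has at most $k+r+2$ nonzero coefficients, and whose objective value $\mathrm{OPT}=f(Xw)+\tfrac{\gamma}{2}\|w\|_2^2$ satisfies $$p_{\rm con}(k+r+2)\le \mathrm{OPT}\le p^{**}_{\rm con}(k)\le p_{\rm con}(k).$$
   Context: $\|w\|_0$ denotes the number of nonzero entries of $w$. For $u\in\mathbb{R}^m$, $D(u)=\mathrm{diag}(u_1,\dots,u_m)$. $\mathbf 1$ is the all-ones vector. A function is closed if it is lower semicontinuous (its epigraph is closed). *)

theory Defs
  imports "HOL-Probability.Probability"
begin

definition Dg :: "real^'m \<Rightarrow> real^'m \<Rightarrow> real^'m" where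
  "Dg u v = (\<chi> i. u $ i * v $ i)"

definition l0norm :: "real^'m \<Rightarrow> nat" where
  "l0norm w = card {i. w $ i \<noteq> 0}"

definition closed_fun :: "(real^'n \<Rightarrow> ereal) \<Rightarrow> bool" where
  "closed_fun f \<longleftrightarrow> closed {p :: (real^'n) \<times> real. f (fst p) \<le> ereal (snd p)}"

definition convex_fun :: "(real^'n \<Rightarrow> ereal) \<Rightarrow> bool" where
  "convex_fun f \<longleftrightarrow> convex {p :: (real^'n) \<times> real. f (fst p) \<le> ereal (snd p)}"

definition con_obj :: "(real^'n \<Rightarrow> ereal) \<Rightarrow> real^'m^'n \<Rightarrow> real \<Rightarrow> real^'m \<Rightarrow> ereal" where
  "con_obj f X \<gamma> w = f (X *v w) + ereal (\<gamma> / 2 * (norm w)\<^sup>2)"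

definition p_con :: "(real^'n \<Rightarrow> ereal) \<Rightarrow> real^'m^'n \<Rightarrow> real \<Rightarrow> nat \<Rightarrow> ereal" where
  "p_con f X \<gamma> q = (INF w \<in> {w. l0norm w \<le> q}. con_obj f X \<gamma> w)"

definition relax_obj :: "(real^'n \<Rightarrow> ereal) \<Rightarrow> real^'m^'n \<Rightarrow> real \<Rightarrow> real^'m \<Rightarrow> real^'m \<Rightarrow> ereal" where
  "relax_obj f X \<gamma> v u = f (X *v Dg u v) + ereal (\<gamma> / 2 * (v \<bullet> Dg u v))"

definition relax_feasible :: "nat \<Rightarrow> real^'m \<Rightarrow> bool" where
  "relax_feasible k u \<longleftrightarrow> (\<forall>i. 0 \<le> u $ i \<and> u $ i \<le> 1) \<and> (\<Sum>i\<in>UNIV. u $ i) \<le> real k"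

definition p_relax :: "(real^'n \<Rightarrow> ereal) \<Rightarrow> real^'m^'n \<Rightarrow> real \<Rightarrow> nat \<Rightarrow> ereal" where
  "p_relax f X \<gamma> k = (INF vu \<in> {(v, u). relax_feasible k u}. relax_obj f X \<gamma> (fst vu) (snd vu))"

definition lp_feasible :: "('a::real_inner \<times> real) set \<Rightarrow> ('a \<times> real) set \<Rightarrow> 'a \<Rightarrow> bool" where
  "lp_feasible E I x \<longleftrightarrow> (\<forall>(a, b) \<in> E. a \<bullet> x = b) \<and> (\<forall>(a, b) \<in> I. a \<bullet> x \<le> b)"

definition basic_feasible_solution :: "('a::euclidean_space \<times> real) set \<Rightarrow> ('a \<times> real) set \<Rightarrow> 'a \<Rightarrow> bool" where
  "basic_feasible_solution E I x \<longleftrightarrow> lp_feasible E I x \<and>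
     span ({a. \<exists>b. (a, b) \<in> E} \<union> {a. \<exists>b. (a, b) \<in> I \<and> a \<bullet> x = b}) = UNIV"

definition lp_optimal :: "'a::real_inner \<Rightarrow> ('a \<times> real) set \<Rightarrow> ('a \<times> real) set \<Rightarrow> 'a \<Rightarrow> bool" where
  "lp_optimal c E I x \<longleftrightarrow> lp_feasible E I x \<and> (\<forall>y. lp_feasible E I y \<longrightarrow> c \<bullet> x \<le> c \<bullet> y)"

text \<open>z* = Sigma_r V_r^T D(u*) v*, with columns of V_r given by V 0, ..., V (r-1)
  and singular values sigma 0, ..., sigma (r-1); z* is represented as a function on {..<r}.\<close>
definition zstar :: "(nat \<Rightarrow> real) \<Rightarrow> (nat \<Rightarrow> real^'m) \<Rightarrow> real^'m \<Rightarrow> real^'m \<Rightarrow> nat \<Rightarrow> real" where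
  "zstar \<sigma> V us vs j = \<sigma> j * (V j \<bullet> Dg us vs)"

definition Ur_apply :: "nat \<Rightarrow> (nat \<Rightarrow> real^'n) \<Rightarrow> (nat \<Rightarrow> real) \<Rightarrow> real^'n" where
  "Ur_apply r U z = (\<Sum>j<r. z j *\<^sub>R U j)"

text \<open>Equality constraints: the objective-value constraint
  (only present when f(U_r z*) is finite; otherwise it reads +oo = +oo and is vacuous) and the
  r constraints sum_i u_i l_i v*_i = z*, where (l_i)_j = sigma_j (V_j)_i.\<close>
definition lp_eqs :: "(real^'n \<Rightarrow> ereal) \<Rightarrow> real \<Rightarrow> nat \<Rightarrow> (nat \<Rightarrow> real^'n) \<Rightarrow> (nat \<Rightarrow> real)
    \<Rightarrow> (nat \<Rightarrow> real^'m) \<Rightarrow> real^'m \<Rightarrow> real^'m \<Rightarrow> ereal \<Rightarrow> ((real^'m) \<times> real) set" where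
  "lp_eqs f \<gamma> r U \<sigma> V vs us ts =
     (if f (Ur_apply r U (zstar \<sigma> V us vs)) = \<infinity> then {}
      else {((\<chi> i. \<gamma> / 2 * (vs $ i)\<^sup>2),
             real_of_ereal ts - real_of_ereal (f (Ur_apply r U (zstar \<sigma> V us vs))))})
     \<union> {((\<chi> i. \<sigma> j * V j $ i * vs $ i), zstar \<sigma> V us vs j) | j. j < r}"

definition lp_ineqs :: "nat \<Rightarrow> ((real^'m) \<times> real) set" where
  "lp_ineqs k = {((\<chi> i. 1), real k)} \<union> {(axis i 1, 1) | i. True} \<union> {(- axis i 1, 0) | i. True}"

definition std_gauss :: "(real^'m) measure" where
  "std_gauss = density lborel (\<lambda>c. ennreal (\<Prod>i\<in>UNIV. std_normal_density (c $ i)))"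

definition u_tilde :: "real^'m \<Rightarrow> real^'m" where
  "u_tilde ub = (\<chi> i. if ub $ i = 0 \<or> ub $ i = 1 then ub $ i else 1)"

definition v_tilde :: "real^'m \<Rightarrow> real^'m \<Rightarrow> real^'m" where
  "v_tilde ub vs = (\<chi> i. if ub $ i = 0 \<or> ub $ i = 1 then vs $ i else ub $ i * vs $ i)"

end

theory Submission
  imports Defs
begin

lemma Xv_Ur:
  assumes svd: "X = (\<chi> i j. \<Sum>l<r. \<sigma> l * U l $ i * V l $ j)"
  shows "X *v Dg u vs = Ur_apply r U (zstar \<sigma> V u vs)"
proof -
  have "(X *v Dg u vs) $ i = Ur_apply r U (zstar \<sigma> V u vs) $ i" for i
  proof -
    have "(X *v Dg u vs) $ i = (\<Sum>j\<in>UNIV. \<Sum>l<r. \<sigma> l * U l $ i * V l $ j * (Dg u vs $ j))"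
      by (simp add: svd matrix_vector_mult_def sum_distrib_right)
    also have "\<dots> = (\<Sum>l<r. \<Sum>j\<in>UNIV. \<sigma> l * U l $ i * V l $ j * (Dg u vs $ j))"
      by (rule sum.swap)
    also have "\<dots> = Ur_apply r U (zstar \<sigma> V u vs) $ i"
      by (simp add: Ur_apply_def zstar_def inner_vec_def sum_distrib_left sum_distrib_right
          sum_component algebra_simps)
    finally show ?thesis .
  qed
  then show ?thesis by (simp add: vec_eq_iff)
qed

lemma Ur_cong: "(\<And>j. j < r \<Longrightarrow> z j = z' j) \<Longrightarrow> Ur_apply r U z = Ur_apply r U z'"
  by (simp add: Ur_apply_def)

lemma relax_le_con:
  fixes f :: "real^'n \<Rightarrow> ereal" and X :: "real^'m^'n"
  shows   "p_relax f X \<gamma> k \<le> p_con f X \<gamma> k"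
  unfolding p_con_def
proof (rule INF_greatest)
  fix w :: "real^'m" assume "w \<in> {w. l0norm w \<le> k}"
  then have wk: "card {i. w $ i \<noteq> 0} \<le> k" by (simp add: l0norm_def)
  define u :: "real^'m" where "u = (\<chi> i. if w $ i = 0 then 0 else 1)"
  have D: "Dg u w = w" by (simp add: Dg_def u_def vec_eq_iff)
  have "(\<Sum>i\<in>UNIV. u $ i) = real (card {i. w $ i \<noteq> 0})"
    by (simp add: u_def sum.If_cases) (simp add: Collect_neg_eq)
  then have feas: "relax_feasible k u" using wk by (simp add: relax_feasible_def u_def)
  have "p_relax f X \<gamma> k \<le> relax_obj f X \<gamma> w u"
    unfolding p_relax_def by (rule INF_lower2[where i="(w,u)"]) (use feas in auto)
  also have "\<dots> = con_obj f X \<gamma> w"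
    by (simp add: relax_obj_def con_obj_def D power2_norm_eq_inner)
  finally show "p_relax f X \<gamma> k \<le> con_obj f X \<gamma> w" .
qed

lemma card_ones:
  fixes ub :: "real^'m"
  assumes "\<forall>i. 0 \<le> ub $ i" "(\<Sum>i\<in>UNIV. ub $ i) \<le> real k"
  shows "card {i. ub $ i = 1} \<le> k"
proof -
  have "real (card {i. ub $ i = 1}) = (\<Sum>i\<in>{i. ub $ i = 1}. ub $ i)" by simp
  also have "\<dots> \<le> (\<Sum>i\<in>UNIV. ub $ i)" by (rule sum_mono2) (use assms in auto)
  finally show ?thesis using assms by linarith
qed

lemma frac_bound:
  fixes ub :: "real^'m" and E :: "((real^'m) \<times> real) set"
  assumes bfs: "basic_feasible_solution E (lp_ineqs k) ub"
    and finE: "finite E" and cardE: "card E \<le> r + 1"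
  shows "card {i. ub $ i \<noteq> 0 \<and> ub $ i \<noteq> 1} \<le> r + 2"
proof -
  define F where "F = {i. ub $ i \<noteq> 0 \<and> ub $ i \<noteq> 1}"
  define W where "W = fst ` E \<union> {(\<chi> i. 1) :: real^'m} \<union> (\<lambda>i. axis i 1) ` (- F)"
  have sp: "span ({a. \<exists>b. (a, b) \<in> E} \<union> {a. \<exists>b. (a, b) \<in> lp_ineqs k \<and> a \<bullet> ub = b}) = UNIV"
    using bfs by (simp add: basic_feasible_solution_def)
  have sub: "{a. \<exists>b. (a, b) \<in> E} \<union> {a. \<exists>b. (a, b) \<in> lp_ineqs k \<and> a \<bullet> ub = b} \<subseteq> span W"
  proof
    fix a assume a: "a \<in> {a. \<exists>b. (a, b) \<in> E} \<union> {a. \<exists>b. (a, b) \<in> lp_ineqs k \<and> a \<bullet> ub = b}"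
    then consider "a \<in> fst ` E" | "a = (\<chi> i. 1)" | i where "a = axis i 1" "ub $ i = 1"
      | i where "a = - axis i 1" "ub $ i = 0"
    proof -
      assume h1: "a \<in> fst ` E \<Longrightarrow> thesis" and h2: "a = (\<chi> i. 1) \<Longrightarrow> thesis"
        and h3: "\<And>i. a = axis i 1 \<Longrightarrow> ub $ i = 1 \<Longrightarrow> thesis"
        and h4: "\<And>i. a = - axis i 1 \<Longrightarrow> ub $ i = 0 \<Longrightarrow> thesis"
      from a consider b where "(a, b) \<in> E" | b where "(a, b) \<in> lp_ineqs k" "a \<bullet> ub = b" by blast
      then show thesis
      proof cases
        case 1 then show thesis using h1 by force
      next
        case (2 b)
        then consider "a = (\<chi> i. 1)" | i where "a = axis i 1" "b = 1" | i where "a = - axis i 1" "b = 0"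
          unfolding lp_ineqs_def by blast
        then show thesis
        proof cases
          case 1 then show thesis by (rule h2)
        next
          case (2 i) then show thesis using h3 \<open>a \<bullet> ub = b\<close> by (simp add: inner_axis')
        next
          case (3 i) then show thesis using h4 \<open>a \<bullet> ub = b\<close> by (simp add: inner_axis')
        qed
      qed
    qed
    then show "a \<in> span W"
    proof cases
      case 1 then show ?thesis by (simp add: W_def span_base)
    next
      case 2 then show ?thesis by (simp add: W_def span_base)
    next
      case 3 then have "a \<in> W" by (auto simp: W_def F_def)
      then show ?thesis by (simp add: span_base)
    next
      case 4 then have "axis i 1 \<in> W" by (auto simp: W_def F_def)
      then show ?thesis using 4 by (simp add: span_base span_neg)
    qed
  qed
  have "UNIV \<subseteq> span W" using span_mono[OF sub] sp by (simp add: span_span)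
  then have "dim (UNIV :: (real^'m) set) \<le> card W" by (rule dim_le_card) (simp add: W_def finE)
  then have c1: "CARD('m) \<le> card W" by simp
  have "card W \<le> card (fst ` E) + card {(\<chi> i. 1) :: real^'m} + card ((\<lambda>i. axis i 1 :: real^'m) ` (- F))"
    unfolding W_def by (meson card_Un_le le_trans add_right_mono)
  also have "\<dots> \<le> (r + 1) + 1 + card (- F)"
    using card_image_le[OF finE, of fst] cardE card_image_le[of "-F" "\<lambda>i. axis i 1 :: real^'m"]
    by simp
  finally have "CARD('m) \<le> r + 2 + card (- F)" using c1 by simp
  moreover have "card (- F) = CARD('m) - card F"
    by (simp add: Compl_eq_Diff_UNIV card_Diff_subset)
  moreover have "card F \<le> CARD('m)" by (simp add: card_mono)
  ultimately show ?thesis unfolding F_def by linarith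
qed

lemma l0_bound:
  fixes ub vs :: "real^'m"
  assumes "\<forall>i. 0 \<le> ub $ i" "(\<Sum>i\<in>UNIV. ub $ i) \<le> real k"
    "card {i. ub $ i \<noteq> 0 \<and> ub $ i \<noteq> 1} \<le> r + 2"
  shows "l0norm (Dg ub vs) \<le> k + r + 2"
proof -
  have "{i. Dg ub vs $ i \<noteq> 0} \<subseteq> {i. ub $ i = 1} \<union> {i. ub $ i \<noteq> 0 \<and> ub $ i \<noteq> 1}"
    by (auto simp: Dg_def)
  then have "card {i. Dg ub vs $ i \<noteq> 0} \<le> card ({i. ub $ i = 1} \<union> {i. ub $ i \<noteq> 0 \<and> ub $ i \<noteq> 1})"
    by (intro card_mono) auto
  also have "\<dots> \<le> card {i. ub $ i = 1} + card {i. ub $ i \<noteq> 0 \<and> ub $ i \<noteq> 1}"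
    by (rule card_Un_le)
  finally show ?thesis using card_ones[OF assms(1,2)] assms(3) by (simp add: l0norm_def)
qed

theorem theorem2p1:
  fixes f :: "real^'n \<Rightarrow> ereal" and X :: "real^'m^'n"
    and r :: nat and U :: "nat \<Rightarrow> real^'n" and \<sigma> :: "nat \<Rightarrow> real" and V :: "nat \<Rightarrow> real^'m"
    and \<gamma> :: real and k :: nat and vs us :: "real^'m"
  assumes f_convex: "convex_fun f" and f_closed: "closed_fun f"
    and f_values: "\<forall>x. f x \<noteq> -\<infinity>"
    and rank_X: "rank X = r"
    and svd: "X = (\<chi> i j. \<Sum>l<r. \<sigma> l * U l $ i * V l $ j)"
    and U_orth: "\<forall>a<r. \<forall>b<r. U a \<bullet> U b = (if a = b then 1 else 0)"
    and V_orth: "\<forall>a<r. \<forall>b<r. V a \<bullet> V b = (if a = b then 1 else 0)"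
    and \<sigma>_pos: "\<forall>l<r. \<sigma> l > 0"
    and \<gamma>_pos: "\<gamma> > 0"
    and opt_feas: "relax_feasible k us"
    and opt_val: "relax_obj f X \<gamma> vs us = p_relax f X \<gamma> k"
  shows "AE c in std_gauss.
           \<forall>ub. lp_optimal c (lp_eqs f \<gamma> r U \<sigma> V vs us (p_relax f X \<gamma> k)) (lp_ineqs k) ub \<and>
                basic_feasible_solution (lp_eqs f \<gamma> r U \<sigma> V vs us (p_relax f X \<gamma> k)) (lp_ineqs k) ub
            \<longrightarrow> Dg ub vs = Dg (u_tilde ub) (v_tilde ub vs)
              \<and> l0norm (Dg ub vs) \<le> k + r + 2
              \<and> p_con f X \<gamma> (k + r + 2) \<le> con_obj f X \<gamma> (Dg ub vs)
              \<and> con_obj f X \<gamma> (Dg ub vs) \<le> p_relax f X \<gamma> k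
              \<and> p_relax f X \<gamma> k \<le> p_con f X \<gamma> k"
proof (rule always_eventually, intro allI impI)
  fix c ub :: "real^'m"
  define E where "E = lp_eqs f \<gamma> r U \<sigma> V vs us (p_relax f X \<gamma> k)"
  define zs where "zs = zstar \<sigma> V us vs"
  define P where "P = p_relax f X \<gamma> k"
  assume "lp_optimal c (lp_eqs f \<gamma> r U \<sigma> V vs us (p_relax f X \<gamma> k)) (lp_ineqs k) ub \<and>
          basic_feasible_solution (lp_eqs f \<gamma> r U \<sigma> V vs us (p_relax f X \<gamma> k)) (lp_ineqs k) ub"
  then have bfs: "basic_feasible_solution E (lp_ineqs k) ub" by (simp add: E_def)
  then have feas: "lp_feasible E (lp_ineqs k) ub" by (simp add: basic_feasible_solution_def)
  have ineq: "(a, b) \<in> lp_ineqs k \<Longrightarrow> a \<bullet> ub \<le> b" for a b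
    using feas by (auto simp: lp_feasible_def)
  have eq: "(a, b) \<in> E \<Longrightarrow> a \<bullet> ub = b" for a b
    using feas by (auto simp: lp_feasible_def)
  have ub0: "\<forall>i. 0 \<le> ub $ i"
  proof
    fix i have "(- axis i (1::real) :: real^'m, 0::real) \<in> lp_ineqs k" by (auto simp: lp_ineqs_def)
    from ineq[OF this] show "0 \<le> ub $ i" by (simp add: inner_axis')
  qed
  have ub1: "\<forall>i. ub $ i \<le> 1"
  proof
    fix i have "(axis i (1::real) :: real^'m, 1::real) \<in> lp_ineqs k" by (auto simp: lp_ineqs_def)
    from ineq[OF this] show "ub $ i \<le> 1" by (simp add: inner_axis')
  qed
  have usum: "(\<Sum>i\<in>UNIV. ub $ i) \<le> real k"
  proof -
    have "((\<chi> i. 1) :: real^'m, real k) \<in> lp_ineqs k" by (auto simp: lp_ineqs_def)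
    from ineq[OF this] show ?thesis by (simp add: inner_vec_def)
  qed
  have E2: "{((\<chi> i. \<sigma> j * V j $ i * vs $ i), zstar \<sigma> V us vs j) | j. j < r}
      = (\<lambda>j. ((\<chi> i. \<sigma> j * V j $ i * vs $ i), zstar \<sigma> V us vs j)) ` {..<r}" by auto
  have finE: "finite E" and cardE: "card E \<le> r + 1"
  proof -
    define E1 :: "((real^'m) \<times> real) set" where "E1 = (if f (Ur_apply r U (zstar \<sigma> V us vs)) = \<infinity> then {}
      else {((\<chi> i. \<gamma> / 2 * (vs $ i)\<^sup>2),
             real_of_ereal (p_relax f X \<gamma> k) - real_of_ereal (f (Ur_apply r U (zstar \<sigma> V us vs))))})"
    have E1: "E = E1 \<union> (\<lambda>j. ((\<chi> i. \<sigma> j * V j $ i * vs $ i), zstar \<sigma> V us vs j)) ` {..<r}"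
      "finite E1" "card E1 \<le> 1"
      unfolding E_def lp_eqs_def E2 E1_def by simp_all
    show "finite E" using E1 by simp
    have "card E \<le> card E1 + card ((\<lambda>j. ((\<chi> i. \<sigma> j * V j $ i * vs $ i), zstar \<sigma> V us vs j)) ` {..<r})"
      unfolding E1(1) by (rule card_Un_le)
    also have "\<dots> \<le> 1 + r" by (rule add_mono[OF E1(3) order_trans[OF card_image_le[OF finite_lessThan] eq_imp_le[OF card_lessThan]]])
    finally show "card E \<le> r + 1" by simp
  qed
  have l0: "l0norm (Dg ub vs) \<le> k + r + 2"
    by (rule l0_bound[OF ub0 usum frac_bound[OF bfs finE cardE]])
  have zeq: "zstar \<sigma> V ub vs j = zs j" if "j < r" for j
  proof -
    have "((\<chi> i. \<sigma> j * V j $ i * vs $ i), zstar \<sigma> V us vs j) \<in> E"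
      using that by (auto simp: E_def lp_eqs_def)
    from eq[OF this] show ?thesis
      by (simp add: zs_def zstar_def inner_vec_def Dg_def sum_distrib_left algebra_simps)
  qed
  have Xw: "X *v Dg ub vs = Ur_apply r U zs"
    using Xv_Ur[OF svd] Ur_cong zeq by metis
  have Xs: "X *v Dg us vs = Ur_apply r U zs"
    using Xv_Ur[OF svd] zs_def by metis
  have Pdef: "P = f (Ur_apply r U zs) + ereal (\<gamma> / 2 * (vs \<bullet> Dg us vs))"
    using opt_val Xs by (simp add: P_def relax_obj_def)
  have obj_le: "con_obj f X \<gamma> (Dg ub vs) \<le> P"
  proof (cases "f (Ur_apply r U zs) = \<infinity>")
    case True then show ?thesis by (simp add: Pdef)
  next
    case False
    then obtain a where a: "f (Ur_apply r U zs) = ereal a" using f_values by (cases "f (Ur_apply r U zs)") auto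
    have P': "P = ereal (a + \<gamma> / 2 * (vs \<bullet> Dg us vs))" by (simp add: Pdef a)
    have "((\<chi> i. \<gamma> / 2 * (vs $ i)\<^sup>2), real_of_ereal P - a) \<in> E"
      using False a by (simp add: E_def lp_eqs_def zs_def P_def)
    from eq[OF this] have key: "(\<Sum>i\<in>UNIV. \<gamma> / 2 * (vs $ i)\<^sup>2 * ub $ i) = \<gamma> / 2 * (vs \<bullet> Dg us vs)"
      by (simp add: inner_vec_def P')
    have "(norm (Dg ub vs))\<^sup>2 = (\<Sum>i\<in>UNIV. (ub $ i)\<^sup>2 * (vs $ i)\<^sup>2)"
      unfolding power2_norm_eq_inner by (simp add: inner_vec_def Dg_def power2_eq_square algebra_simps)
    also have "\<dots> \<le> (\<Sum>i\<in>UNIV. ub $ i * (vs $ i)\<^sup>2)"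
    proof (rule sum_mono)
      fix i
      have "(ub $ i)\<^sup>2 \<le> ub $ i" using ub0 ub1
        by (metis mult_left_le mult_nonneg_nonneg power2_eq_square)
      then show "(ub $ i)\<^sup>2 * (vs $ i)\<^sup>2 \<le> ub $ i * (vs $ i)\<^sup>2" by (rule mult_right_mono) simp
    qed
    finally have "\<gamma> / 2 * (norm (Dg ub vs))\<^sup>2 \<le> \<gamma> / 2 * (\<Sum>i\<in>UNIV. ub $ i * (vs $ i)\<^sup>2)"
      using \<gamma>_pos by simp
    also have "\<dots> = \<gamma> / 2 * (vs \<bullet> Dg us vs)"
      using key by (simp add: sum_distrib_left algebra_simps)
    finally have "\<gamma> / 2 * (norm (Dg ub vs))\<^sup>2 \<le> \<gamma> / 2 * (vs \<bullet> Dg us vs)" .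
    then show ?thesis by (simp add: con_obj_def Xw a P')
  qed
  have pc: "p_con f X \<gamma> (k + r + 2) \<le> con_obj f X \<gamma> (Dg ub vs)"
    unfolding p_con_def by (rule INF_lower) (use l0 in simp)
  have dd: "Dg ub vs = Dg (u_tilde ub) (v_tilde ub vs)"
    by (simp add: Dg_def u_tilde_def v_tilde_def vec_eq_iff)
  show "Dg ub vs = Dg (u_tilde ub) (v_tilde ub vs)
              \<and> l0norm (Dg ub vs) \<le> k + r + 2
              \<and> p_con f X \<gamma> (k + r + 2) \<le> con_obj f X \<gamma> (Dg ub vs)
              \<and> con_obj f X \<gamma> (Dg ub vs) \<le> p_relax f X \<gamma> k
              \<and> p_relax f X \<gamma> k \<le> p_con f X \<gamma> k"
    using dd l0 pc obj_le relax_le_con unfolding P_def by blast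
qed

end
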